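(* Let $N\ge 0$ be an integer, let $h>0$, and let $T^{(i-1)},T^{(i)},T^{(i+1)}$ be three consecutive closed intervals of length $h$ on the real line (so $T^{(i-1)}=[x_{i-1/2}-h,x_{i-1/2}]$, $T^{(i)}=[x_{i-1/2},x_{i+1/2}]$, $T^{(i+1)}=[x_{i+1/2},x_{i+1/2}+h]$ with $x_{i+1/2}-x_{i-1/2}=h$), and let $\mathcal{S}^{(i)}=T^{(i-1)}\cup T^{(i)}\cup T^{(i+1)}$. For each $j\in\{i-1,i,i+1\}$ let $v^{(j)}$ be a given real polynomial of degree at most $N$ on $T^{(j)}$. Then there exists exactly one real polynomial $w$ of degree at most $M=3N+2$ on $\mathcal{S}^{(i)}$ such that $$\int_{T^{(j)}} w(x)\,\varphi(x)\,dx=\int_{T^{(j)}} v^{(j)}(x)\,\varphi(x)\,dx\qquad\text{for every polynomial }\varphi\text{ of degree at most }N\text{ and every } j\in\{i-1,i,i+1\}.$$ Equivalently, in matrix form: let $P_k$ denote the Legendre polynomial of degree $k$ on $[-1,1]$, set $a_{k,\ell}=\int_{-1}^1 P_k(s)P_\ell(s+2)\,ds$, $b_{k,\ell}=(-1)^{k+\ell}a_{k,\ell}$ and $c_{k,\ell}=\tfrac12(a_{k,\ell}+b_{k,\ell})$. Then the $(2N+2)\times(2N+2)$ matrix $B$ whose first $N+1$ rows are $(a_{k,N+1},\dots,a_{k,3N+2})$, $k=0,\dots,N$, and whose last $N+1$ rows are $(c_{k,N+1},\dots,c_{k,3N+2})$, $k=0,\dots,N$, is invertible, and consequently the reconstruction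 problem above has a unique solution.
   Context: This is the "reconstruction" (inverse $L^2$-projection) step of $P_NP_M$ schemes on the three-cell central stencil: the reconstructed polynomial $w$ of degree $M$ on the whole stencil is required to have the same moments as the given piecewise polynomial data of degree $N$ on each of the three cells, tested against all polynomials of degree at most $N$. The Legendre polynomials $P_k$ are the standard ones on $[-1,1]$ (orthogonal in $L^2(-1,1)$, $\int_{-1}^1 P_k^2=2/(2k+1)$). *)

theory Defs
  imports "HOL-Analysis.Analysis" "HOL-Computational_Algebra.Polynomial"
    "Jordan_Normal_Form.Matrix"
begin

definition legendre :: "nat \<Rightarrow> real poly" where
  "legendre n = Polynomial.smult (1 / (2 ^ n * fact n)) ((pderiv ^^ n) ([:-1, 0, 1:] ^ n))"

definition leg_a :: "nat \<Rightarrow> nat \<Rightarrow> real" where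
  "leg_a k l = integral {-1..1} (\<lambda>s. poly (legendre k) s * poly (legendre l) (s + 2))"

definition leg_b :: "nat \<Rightarrow> nat \<Rightarrow> real" where
  "leg_b k l = (-1) ^ (k + l) * leg_a k l"

definition leg_c :: "nat \<Rightarrow> nat \<Rightarrow> real" where
  "leg_c k l = (leg_a k l + leg_b k l) / 2"

definition recon_matrix :: "nat \<Rightarrow> real mat" where
  "recon_matrix N = mat (2*N+2) (2*N+2) (\<lambda>(r, col).
      if r \<le> N then leg_a r (N + 1 + col) else leg_c (r - (N + 1)) (N + 1 + col))"

(* the j-th cell (j = 0,1,2 for T^(i-1), T^(i), T^(i+1)) with left endpoint x_{i-1/2} = a *)
definition cell :: "real \<Rightarrow> real \<Rightarrow> nat \<Rightarrow> real set" where
  "cell a h j = {a + (real j - 1) * h .. a + real j * h}"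

end

theory Submission
  imports Defs "Jordan_Normal_Form.Determinant"
begin

lemma pderiv_sum': "pderiv (sum f A) = (\<Sum>x\<in>A. pderiv (f x))"
  using higher_pderiv_sum[of 1 f A] by simp

lemma ex_antider: "\<exists>P. pderiv P = (p::real poly)"
proof -
  define P where "P = (\<Sum>i\<le>degree p. monom (coeff p i / real (Suc i)) (Suc i))"
  have "pderiv P = (\<Sum>i\<le>degree p. monom (coeff p i) i)"
    unfolding P_def pderiv_sum' pderiv_monom by (simp del: of_nat_Suc)
  also have "\<dots> = p" by (rule poly_as_sum_of_monoms)
  finally show ?thesis by blast
qed

lemma poly_has_integral_antider:
  assumes "a \<le> (b::real)" "pderiv P = p"
  shows "(poly p has_integral (poly P b - poly P a)) {a..b}"
proof (rule fundamental_theorem_of_calculus[OF assms(1)])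
  fix x assume "x \<in> {a..b}"
  have "(poly P has_real_derivative poly p x) (at x within {a..b})"
    using poly_DERIV[of P x] assms(2) by (simp add: has_field_derivative_at_within)
  then show "(poly P has_vector_derivative poly p x) (at x within {a..b})"
    by (simp add: has_real_derivative_iff_has_vector_derivative)
qed

lemma integral_poly_antider:
  assumes "a \<le> (b::real)" "pderiv P = p"
  shows "integral {a..b} (poly p) = poly P b - poly P a"
  using poly_has_integral_antider[OF assms] by (rule integral_unique)

lemma integral_poly_add:
  assumes "a \<le> (b::real)"
  shows "integral {a..b} (poly (p + q)) = integral {a..b} (poly p) + integral {a..b} (poly q)"
proof -
  obtain P Q where "pderiv P = p" "pderiv Q = q" using ex_antider by metis
  then show ?thesis using assms
    by (simp add: integral_poly_antider[of a b P p] integral_poly_antider[of a b Q q]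
        integral_poly_antider[of a b "P+Q" "p+q"] pderiv_add)
qed

lemma integral_poly_smult:
  assumes "a \<le> (b::real)"
  shows "integral {a..b} (poly (Polynomial.smult c p)) = c * integral {a..b} (poly p)"
proof -
  obtain P where "pderiv P = p" using ex_antider by metis
  then show ?thesis using assms
    by (simp add: integral_poly_antider[of a b P p] pderiv_smult
        integral_poly_antider[of a b "Polynomial.smult c P" "Polynomial.smult c p"] algebra_simps)
qed

lemma integral_poly_diff:
  assumes "a \<le> (b::real)"
  shows "integral {a..b} (poly (p - q)) = integral {a..b} (poly p) - integral {a..b} (poly q)"
  using integral_poly_add[OF assms, of "p - q" q] by simp


lemma integral_poly_sum:
  assumes "a \<le> (b::real)"
  shows "integral {a..b} (poly (\<Sum>i\<in>A. f i)) = (\<Sum>i\<in>A. integral {a..b} (poly (f i)))"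
proof (induction A rule: infinite_finite_induct)
  case (insert x F)
  then show ?case using integral_poly_add[OF assms, of "f x" "sum f F"] by (simp del: poly_add)
qed auto

lemma integral_poly_ibp:
  assumes "a \<le> (b::real)"
  shows "integral {a..b} (poly (pderiv f * g)) =
    poly f b * poly g b - poly f a * poly g a - integral {a..b} (poly (f * pderiv g))"
proof -
  have "integral {a..b} (poly (pderiv f * g + f * pderiv g)) = poly (f*g) b - poly (f*g) a"
    by (rule integral_poly_antider[OF assms]) (simp add: pderiv_mult algebra_simps)
  then show ?thesis by (simp add: integral_poly_add[OF assms])
qed

lemma integral_poly_shift:
  assumes "a \<le> (b::real)"
  shows "integral {a..b} (poly (pcompose p [:c, 1:])) = integral {a+c..b+c} (poly p)"
proof -
  obtain P where P: "pderiv P = p" using ex_antider by metis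
  have "pderiv (pcompose P [:c,1:]) = pcompose p [:c,1:]"
    by (simp add: pderiv_pcompose P pderiv_pCons)
  then show ?thesis using assms P
    by (simp add: integral_poly_antider[of a b "pcompose P [:c,1:]"]
        integral_poly_antider[of "a+c" "b+c" P] poly_pcompose algebra_simps)
qed

lemma integral_poly_reflect:
  assumes "a \<le> (b::real)"
  shows "integral {a..b} (poly (pcompose p [:c, -1:])) = integral {c-b..c-a} (poly p)"
proof -
  obtain P where P: "pderiv P = p" using ex_antider by metis
  have "pderiv (- pcompose P [:c,-1:]) = pcompose p [:c,-1:]"
    by (simp add: pderiv_pcompose P pderiv_pCons pderiv_minus)
  then show ?thesis using assms P
    by (simp add: integral_poly_antider[of a b "- pcompose P [:c,-1:]"]
        integral_poly_antider[of "c-b" "c-a" P] poly_pcompose algebra_simps)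
qed

lemma poly_mult_fun: "(\<lambda>x. poly p x * poly q x) = poly (p * q)"
  by (rule ext) simp

lemma poly_zero_fun: "poly 0 = (\<lambda>x. 0)"
  by (rule ext) simp

lemma taylor_G:
  fixes F :: "real poly" and \<beta> :: real
  shows "pderiv (\<Sum>i\<le>n. Polynomial.smult (1/fact i) ((pderiv^^i) F * [:\<beta>, -1:]^i))
         = Polynomial.smult (1/fact n) ((pderiv^^(Suc n)) F * [:\<beta>, -1:]^n)"
proof (induction n)
  case 0 show ?case by (simp add: pderiv_smult)
next
  case (Suc n)
  have pq: "pderiv ([:\<beta>, -1:]^Suc n) = Polynomial.smult (- of_nat (Suc n)) ([:\<beta>, -1:]^n)"
    unfolding pderiv_power_Suc by (simp add: pderiv_pCons)
  have nz: "fact n + fact n * real n \<noteq> 0"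
    by (smt (verit) fact_gt_zero mult_nonneg_nonneg of_nat_0_le_iff)
  have fs: "(1::real)/fact (Suc n) * of_nat (Suc n) = 1/fact n"
    using nz by (simp add: field_simps)
  have c: "(1::real)/fact (Suc n) * - of_nat (Suc n) = - (1/fact n)"
    using fs by (metis minus_mult_right)
  show ?case
    apply (simp only: sum.atMost_Suc pderiv_add Suc.IH pderiv_smult pderiv_mult pq
       smult_add_right mult_smult_right smult_smult c smult_minus_left)
    apply (simp add: mult.commute)
    done
qed

lemma taylor_int:
  fixes F :: "real poly"
  assumes "\<alpha> \<le> \<beta>"
  shows "integral {\<alpha>..\<beta>} (poly ((pderiv^^Suc n) F * Polynomial.smult (1/fact n) ([:\<beta>,-1:]^n)))
    = poly F \<beta> - (\<Sum>i\<le>n. poly ((pderiv^^i) F) \<alpha> * (\<beta>-\<alpha>)^i / fact i)"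
proof -
  define G where "G = (\<Sum>i\<le>n. Polynomial.smult (1/fact i) ((pderiv^^i) F * [:\<beta>, -1:]^i))"
  have dG: "pderiv G = (pderiv^^Suc n) F * Polynomial.smult (1/fact n) ([:\<beta>,-1:]^n)"
    unfolding G_def taylor_G by (simp add: mult_smult_right del: funpow.simps)
  have pG: "poly G x = (\<Sum>i\<le>n. poly ((pderiv^^i) F) x * (\<beta> - x)^i / fact i)" for x
    by (simp add: G_def poly_sum)
  have "poly G \<beta> = (\<Sum>i\<le>n. if i = 0 then poly F \<beta> else 0)"
    unfolding pG by (rule sum.cong) auto
  also have "\<dots> = poly F \<beta>" by simp
  finally have "poly G \<beta> = poly F \<beta>" .
  then show ?thesis
    using integral_poly_antider[OF assms dG] pG[of \<alpha>] by simp
qed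

lemma cell_step:
  fixes W :: "real poly"
  assumes ab: "\<alpha> \<le> \<beta>" and z: "\<forall>j\<le>N. poly ((pderiv^^j) W) \<alpha> = 0"
   and m: "\<forall>\<phi>. degree \<phi> \<le> N \<longrightarrow> integral {\<alpha>..\<beta>} (poly ((pderiv^^Suc N) W * \<phi>)) = 0"
  shows "\<forall>j\<le>N. poly ((pderiv^^j) W) \<beta> = 0"
proof (intro allI impI)
  fix j assume j: "j \<le> N"
  define n where "n = N - j"
  define F where "F = (pderiv^^j) W"
  have "(pderiv^^Suc n) F = (pderiv^^(Suc n + j)) W"
    by (simp only: F_def funpow_add o_apply)
  also have "Suc n + j = Suc N" using j n_def by simp
  finally have e1: "(pderiv^^Suc n) F = (pderiv^^Suc N) W" .
  have e2: "poly ((pderiv^^i) F) \<alpha> = 0" if "i \<le> n" for i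
  proof -
    have "(pderiv^^i) F = (pderiv^^(i + j)) W"
      by (simp only: F_def funpow_add o_apply)
    then show ?thesis using z that n_def j by simp
  qed
  have "degree (Polynomial.smult (1/fact n) ([:\<beta>,-1:]^n)) \<le> n"
    by (rule order.trans[OF degree_smult_le]) (rule order.trans[OF degree_power_le], simp)
  then have "integral {\<alpha>..\<beta>} (poly ((pderiv^^Suc N) W * Polynomial.smult (1/fact n) ([:\<beta>,-1:]^n))) = 0"
    using m n_def by (meson diff_le_self order.trans)
  then have "integral {\<alpha>..\<beta>} (poly ((pderiv^^Suc n) F * Polynomial.smult (1/fact n) ([:\<beta>,-1:]^n))) = 0"
    by (simp only: e1)
  then have "poly F \<beta> = (\<Sum>i\<le>n. poly ((pderiv^^i) F) \<alpha> * (\<beta>-\<alpha>)^i / fact i)"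
    using taylor_int[OF ab, of n F] by simp
  also have "\<dots> = 0" using e2 by simp
  finally show "poly ((pderiv^^j) W) \<beta> = 0" unfolding F_def .
qed

lemma ex_iter_antider: "\<exists>W. (pderiv^^m) W = (w::real poly) \<and> (\<forall>j<m. poly ((pderiv^^j) W) x0 = 0)"
proof (induction m)
  case 0 show ?case by auto
next
  case (Suc m)
  then obtain W where W: "(pderiv^^m) W = w" "\<forall>j<m. poly ((pderiv^^j) W) x0 = 0" by blast
  obtain P0 where P0: "pderiv P0 = W" using ex_antider by blast
  define P where "P = P0 - [:poly P0 x0:]"
  have P: "pderiv P = W" "poly P x0 = 0" unfolding P_def using P0 by (simp_all add: pderiv_diff pderiv_pCons)
  have "(pderiv^^Suc m) P = w" by (simp only: funpow_Suc_right o_apply P W)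
  moreover have "\<forall>j<Suc m. poly ((pderiv^^j) P) x0 = 0"
  proof (intro allI impI)
    fix j assume j: "j < Suc m"
    show "poly ((pderiv^^j) P) x0 = 0"
    proof (cases j)
      case 0 then show ?thesis using P by simp
    next
      case (Suc i)
      have "(pderiv^^j) P = (pderiv^^i) W" by (simp only: Suc funpow_Suc_right o_apply P)
      then show ?thesis using W(2) j Suc by simp
    qed
  qed
  ultimately show ?case by blast
qed

lemma order_ge_from_derivs:
  "W \<noteq> 0 \<Longrightarrow> \<forall>j\<le>N. poly ((pderiv^^j) W) c = 0 \<Longrightarrow> Suc N \<le> order c (W::real poly)"
proof (induction N arbitrary: W)
  case 0 then show ?case using order_root[of W c] by auto
next
  case (Suc N)
  have r: "poly W c = 0" using Suc.prems(2) by (metis funpow_0 le0)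
  have d: "pderiv W \<noteq> 0"
  proof
    assume "pderiv W = 0"
    then have "degree W = 0" by (simp add: pderiv_eq_0_iff)
    then have "W = [:coeff W 0:]" using degree_0_id by metis
    with r have "W = 0" by (metis poly_pCons mult_zero_right poly_0 add_0_right pCons_0_0)
    with Suc.prems(1) show False ..
  qed
  have "\<forall>j\<le>N. poly ((pderiv^^j) (pderiv W)) c = 0"
  proof (intro allI impI)
    fix j assume "j \<le> N"
    have e: "(pderiv^^j) (pderiv W) = (pderiv^^Suc j) W" by (simp only: funpow_Suc_right o_apply)
    have "Suc j \<le> Suc N" using \<open>j \<le> N\<close> by simp
    then show "poly ((pderiv^^j) (pderiv W)) c = 0" unfolding e using Suc.prems(2) by blast
  qed
  then have "Suc N \<le> order c (pderiv W)" using Suc.IH d by blast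
  then show ?case using order_pderiv[OF Suc.prems(1) r] by simp
qed

lemma roots_degree:
  fixes W :: "real poly"
  assumes "W \<noteq> 0" "distinct cs" "\<forall>c\<in>set cs. k \<le> order c W"
  shows "length cs * k \<le> degree W"
  using assms
proof (induction cs arbitrary: W)
  case Nil then show ?case by simp
next
  case (Cons c cs)
  have "[:-c,1:]^k dvd W" using order_divides Cons.prems by auto
  then obtain Q where Q: "W = [:-c,1:]^k * Q" by (auto elim: dvdE)
  have Q0: "Q \<noteq> 0" using Q Cons.prems(1) by auto
  have "\<forall>c'\<in>set cs. k \<le> order c' Q"
  proof
    fix c' assume c': "c' \<in> set cs"
    have "c' \<noteq> c" using Cons.prems(2) c' by auto
    then have "poly ([:-c,1:]^k) c' \<noteq> 0" by simp
    then have "order c' ([:-c,1:]^k) = 0" by (rule order_0I)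
    then have "order c' W = order c' Q" using Q order_mult[of "[:-c,1:]^k" Q c'] Cons.prems(1) by simp
    then show "k \<le> order c' Q" using Cons.prems(3) c' by auto
  qed
  then have "length cs * k \<le> degree Q" using Cons.IH Q0 Cons.prems(2) by auto
  moreover have "degree W = k + degree Q" using Q Q0 by (simp add: degree_mult_eq degree_linear_power)
  ultimately show ?case by simp
qed

lemma key_injective:
  fixes w :: "real poly"
  assumes h: "h > 0" and dw: "degree w \<le> 3*N+2"
    and m: "\<forall>j\<in>{0,1,2::nat}. \<forall>\<phi>. degree \<phi> \<le> N \<longrightarrow>
              integral (cell a h j) (\<lambda>x. poly w x * poly \<phi> x) = 0"
  shows "w = 0"
proof -
  obtain W where W: "(pderiv^^Suc N) W = w" "\<forall>j<Suc N. poly ((pderiv^^j) W) (a-h) = 0"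
    using ex_iter_antider by blast
  have c: "cell a h 0 = {a-h..a}" "cell a h 1 = {a..a+h}" "cell a h 2 = {a+h..a+2*h}"
    by (simp_all add: cell_def algebra_simps)
  have m0: "\<forall>\<phi>. degree \<phi> \<le> N \<longrightarrow> integral {a-h..a} (poly ((pderiv^^Suc N) W * \<phi>)) = 0"
    using m c W(1) by (simp add: poly_mult_fun)
  have m1: "\<forall>\<phi>. degree \<phi> \<le> N \<longrightarrow> integral {a..a+h} (poly ((pderiv^^Suc N) W * \<phi>)) = 0"
    using m c W(1) by (simp add: poly_mult_fun)
  have m2: "\<forall>\<phi>. degree \<phi> \<le> N \<longrightarrow> integral {a+h..a+2*h} (poly ((pderiv^^Suc N) W * \<phi>)) = 0"
    using m c W(1) by (simp add: poly_mult_fun)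
  have z0: "\<forall>j\<le>N. poly ((pderiv^^j) W) (a-h) = 0" using W(2) by auto
  have z1: "\<forall>j\<le>N. poly ((pderiv^^j) W) a = 0"
    by (rule cell_step[OF _ z0 m0]) (use h in simp)
  have z2: "\<forall>j\<le>N. poly ((pderiv^^j) W) (a+h) = 0"
    by (rule cell_step[OF _ z1 m1]) (use h in simp)
  have z3: "\<forall>j\<le>N. poly ((pderiv^^j) W) (a+2*h) = 0"
    by (rule cell_step[OF _ z2 m2]) (use h in simp)
  have "W = 0"
  proof (rule ccontr)
    assume W0: "W \<noteq> 0"
    let ?cs = "[a-h, a, a+h, a+2*h]"
    have "distinct ?cs" using h by simp
    moreover have "\<forall>c\<in>set ?cs. Suc N \<le> order c W"
      using order_ge_from_derivs[OF W0] z0 z1 z2 z3 by auto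
    ultimately have "length ?cs * Suc N \<le> degree W" using roots_degree[OF W0] by blast
    moreover have "degree w = degree W - Suc N" using W(1) degree_higher_pderiv by metis
    ultimately show False using dw by simp
  qed
  then show ?thesis using W(1) by simp
qed

lemma span_moments:
  fixes Q :: "nat \<Rightarrow> real poly" and w :: "real poly"
  assumes Q: "\<forall>k\<le>N. degree (Q k) \<le> k \<and> coeff (Q k) k \<noteq> 0"
   and mQ: "\<forall>k\<le>N. integral {\<alpha>..\<beta>} (poly (w * Q k)) = 0" and ab: "\<alpha> \<le> \<beta>"
  shows "\<forall>\<phi>. degree \<phi> \<le> N \<longrightarrow> integral {\<alpha>..\<beta>} (poly (w * \<phi>)) = 0"
proof -
  have "\<forall>\<phi>::real poly. (\<phi> = 0 \<or> degree \<phi> < n) \<longrightarrow> integral {\<alpha>..\<beta>} (poly (w*\<phi>)) = 0" if "n \<le> Suc N" for n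
    using that
  proof (induction n)
    case 0 show ?case
    proof (intro allI impI)
      fix \<phi> :: "real poly" assume "\<phi> = 0 \<or> degree \<phi> < 0"
      then have "\<phi> = 0" by simp
      then have "w * \<phi> = 0" by simp
      then show "integral {\<alpha>..\<beta>} (poly (w*\<phi>)) = 0"
        by (simp only: poly_zero_fun integral_0)
    qed
  next
    case (Suc n)
    show ?case
    proof (intro allI impI)
      fix \<phi> :: "real poly" assume \<phi>: "\<phi> = 0 \<or> degree \<phi> < Suc n"
      define c where "c = coeff \<phi> n / coeff (Q n) n"
      define \<psi> where "\<psi> = \<phi> - Polynomial.smult c (Q n)"
      have nN: "n \<le> N" using Suc.prems by simp
      have cQ: "coeff (Q n) n \<noteq> 0" "degree (Q n) \<le> n" using Q nN by auto
      have cpsi: "coeff \<psi> n = 0" using cQ by (simp add: \<psi>_def c_def)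
      have "degree \<phi> \<le> n" using \<phi> by auto
      moreover have "degree (Polynomial.smult c (Q n)) \<le> n" using cQ(2) degree_smult_le order.trans by blast
      ultimately have "degree \<psi> \<le> n" unfolding \<psi>_def using degree_diff_le by blast
      then have "\<psi> = 0 \<or> degree \<psi> < n"
        using cpsi by (metis le_neq_implies_less leading_coeff_0_iff)
      have IH: "\<forall>\<phi>::real poly. (\<phi> = 0 \<or> degree \<phi> < n) \<longrightarrow> integral {\<alpha>..\<beta>} (poly (w*\<phi>)) = 0"
        by (rule Suc.IH[OF Suc_leD[OF Suc.prems]])
      note psi = \<open>\<psi> = 0 \<or> degree \<psi> < n\<close>
      have i0: "integral {\<alpha>..\<beta>} (poly (w*\<psi>)) = 0" using IH psi by blast
      have "w * \<phi> = w * \<psi> + Polynomial.smult c (w * Q n)" by (simp add: \<psi>_def algebra_simps)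
      then have "integral {\<alpha>..\<beta>} (poly (w*\<phi>)) =
          integral {\<alpha>..\<beta>} (poly (w*\<psi>)) + c * integral {\<alpha>..\<beta>} (poly (w * Q n))"
        by (simp only: integral_poly_add[OF ab] integral_poly_smult[OF ab])
      then show "integral {\<alpha>..\<beta>} (poly (w*\<phi>)) = 0" using i0 mQ nN by simp
    qed
  qed
  then show ?thesis by (metis le_imp_less_Suc order.refl)
qed

definition lu :: "nat \<Rightarrow> real poly" where "lu n = [:-1,0,1:]^n"

lemma legendre_lu: "legendre n = Polynomial.smult (1/(2^n * fact n)) ((pderiv^^n) (lu n))"
  by (simp add: legendre_def lu_def)

lemma degree_lu: "degree (lu n) = 2*n"
  by (simp add: lu_def degree_power_eq)

lemma coeff_lu_top: "coeff (lu n) (2*n) = 1"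
proof -
  have "coeff (lu n) (2*n) = lead_coeff (lu n)" using degree_lu by simp
  also have "\<dots> = 1" by (simp add: lu_def lead_coeff_power)
  finally show ?thesis .
qed

lemma degree_legendre: "degree (legendre n) = n"
  by (simp add: legendre_lu degree_higher_pderiv degree_lu)

lemma coeff_legendre_top: "coeff (legendre n) n \<noteq> 0"
proof -
  have "coeff ((pderiv^^n) (lu n)) n = pochhammer (of_nat (Suc n)) n * coeff (lu n) (n + n)"
    by (rule coeff_higher_pderiv)
  also have "n + n = 2 * n" by simp
  finally have "coeff ((pderiv^^n) (lu n)) n = pochhammer (of_nat (Suc n)) n"
    using coeff_lu_top by simp
  moreover have "(pochhammer (of_nat (Suc n)) n :: real) > 0"
    by (rule pochhammer_pos) simp
  ultimately show ?thesis by (simp add: legendre_lu)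
qed

lemma higher_pderiv_reflect:
  "(pderiv^^n) (pcompose p [:0,-1:]) = Polynomial.smult ((-1)^n) (pcompose ((pderiv^^n) p) [:0,-1:])"
proof (induction n arbitrary: p)
  case 0 show ?case by simp
next
  case (Suc n)
  have "(pderiv^^Suc n) (pcompose p [:0,-1:]) = (pderiv^^n) (pderiv (pcompose p [:0,-1:]))"
    by (simp only: funpow_Suc_right o_apply)
  also have "pderiv (pcompose p [:0,-1:]) = Polynomial.smult (-1) (pcompose (pderiv p) [:0,-1:])"
    by (simp add: pderiv_pcompose pderiv_pCons)
  also have "(pderiv^^n) (Polynomial.smult (-1) (pcompose (pderiv p) [:0,-1:]))
     = Polynomial.smult (-1) (Polynomial.smult ((-1)^n) (pcompose ((pderiv^^n) (pderiv p)) [:0,-1:]))"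
    by (simp only: higher_pderiv_smult Suc.IH)
  also have "(pderiv^^n) (pderiv p) = (pderiv^^Suc n) p" by (simp only: funpow_Suc_right o_apply)
  finally show ?case by (simp only: smult_smult power_Suc)
qed

lemma lu_reflect: "pcompose (lu n) [:0,-1:] = lu n"
proof -
  have "poly (pcompose (lu n) [:0,-1:]) = poly (lu n)"
    by (rule ext) (simp add: lu_def poly_pcompose)
  then show ?thesis by (simp add: poly_eq_poly_eq_iff)
qed

lemma legendre_parity: "poly (legendre n) (-x) = (-1)^n * poly (legendre n) x"
proof -
  let ?d = "(pderiv^^n) (lu n)"
  have e: "?d = Polynomial.smult ((-1)^n) (pcompose ?d [:0,-1:])"
    using higher_pderiv_reflect[of n "lu n"] unfolding lu_reflect .
  have ey: "poly ?d y = (-1)^n * poly ?d (-y)" for y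
    using arg_cong[OF e, of "\<lambda>p. poly p y"] by (simp add: poly_pcompose)
  have "poly ?d (-x) = (-1)^n * poly ?d x"
    using ey[of "-x"] by simp
  then show ?thesis by (simp add: legendre_lu)
qed

lemma dvd_pderiv_pow:
  assumes "[:-c,1:]^Suc k dvd (p::real poly)"
  shows "[:-c,1:]^k dvd pderiv p"
proof -
  obtain q where q: "p = [:-c,1:]^Suc k * q" using assms by (auto elim: dvdE)
  have "pderiv p = [:-c,1:]^Suc k * pderiv q + Polynomial.smult (of_nat (Suc k)) (q * [:-c,1:]^k)"
    unfolding q by (rule lemma_order_pderiv1)
  moreover have "[:-c,1:]^k dvd [:-c,1:]^Suc k * pderiv q"
    by (rule dvd_mult2) (rule le_imp_power_dvd, simp)
  moreover have "[:-c,1:]^k dvd Polynomial.smult (of_nat (Suc k)) (q * [:-c,1:]^k)"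
    by (rule dvd_smult) simp
  ultimately show ?thesis by simp
qed

lemma dvd_higher_pderiv:
  assumes "[:-c,1:]^l dvd (p::real poly)"
  shows "m \<le> l \<Longrightarrow> [:-c,1:]^(l-m) dvd (pderiv^^m) p"
proof (induction m)
  case 0 then show ?case using assms by simp
next
  case (Suc m)
  then have "[:-c,1:]^Suc (l - Suc m) dvd (pderiv^^m) p"
    by (simp add: Suc_diff_Suc)
  then show ?case using dvd_pderiv_pow by simp
qed

lemma lu_factor: "lu l = [:-1,1:]^l * [:-(-1),1:]^l"
  by (simp add: lu_def power_mult_distrib[symmetric])

lemma lu_vanish:
  assumes "m < l"
  shows "poly ((pderiv^^m) (lu l)) 1 = 0" "poly ((pderiv^^m) (lu l)) (-1) = 0"
proof -
  have d1: "[:-1,1:]^l dvd lu l" unfolding lu_factor by simp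
  have d2: "[:-(-1),1:]^l dvd lu l" unfolding lu_factor by (rule dvd_triv_right)
  have "[:-1,1:] dvd [:-1,1:]^(l-m)" using assms by (simp add: dvd_power)
  also have "\<dots> dvd (pderiv^^m) (lu l)" using dvd_higher_pderiv[OF d1] assms by simp
  finally show "poly ((pderiv^^m) (lu l)) 1 = 0" by (simp add: poly_eq_0_iff_dvd)
  have "[:-(-1),1:] dvd [:-(-1),1:]^(l-m)" using assms by (simp add: dvd_power)
  also have "\<dots> dvd (pderiv^^m) (lu l)" using dvd_higher_pderiv[OF d2] assms by simp
  finally show "poly ((pderiv^^m) (lu l)) (-1) = 0" by (simp only: poly_eq_0_iff_dvd)
qed

lemma ibp_iter:
  "m \<le> l \<Longrightarrow> integral {-1..1} (poly ((pderiv^^m) (lu l) * g))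
     = (-1)^m * integral {-1..1} (poly (lu l * (pderiv^^m) g))"
proof (induction m arbitrary: g)
  case 0 then show ?case by simp
next
  case (Suc m)
  have ml: "m < l" using Suc.prems by simp
  have "integral {-1..1} (poly ((pderiv^^Suc m) (lu l) * g))
      = integral {-1..1} (poly (pderiv ((pderiv^^m) (lu l)) * g))" by simp
  also have "\<dots> = - integral {-1..1} (poly ((pderiv^^m) (lu l) * pderiv g))"
    using integral_poly_ibp[of "-1" 1 "(pderiv^^m) (lu l)" g] lu_vanish[OF ml] by simp
  also have "integral {-1..1} (poly ((pderiv^^m) (lu l) * pderiv g))
      = (-1)^m * integral {-1..1} (poly (lu l * (pderiv^^m) (pderiv g)))"
    using Suc.IH[of "pderiv g"] ml by (meson less_imp_le)
  also have "(pderiv^^m) (pderiv g) = (pderiv^^Suc m) g" by (simp only: funpow_Suc_right o_apply)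
  finally show ?case by simp
qed

lemma legendre_orth:
  assumes "degree g < l"
  shows "integral {-1..1} (poly (legendre l * g)) = 0"
proof -
  have z: "(pderiv^^l) g = 0"
  proof (rule poly_eqI)
    fix n show "coeff ((pderiv^^l) g) n = coeff 0 n"
      using assms by (simp add: coeff_higher_pderiv coeff_eq_0)
  qed
  have "legendre l * g = Polynomial.smult (1/(2^l * fact l)) ((pderiv^^l) (lu l) * g)"
    by (simp add: legendre_lu)
  then have "integral {-1..1} (poly (legendre l * g))
     = (1/(2^l * fact l)) * integral {-1..1} (poly ((pderiv^^l) (lu l) * g))"
    by (simp only: integral_poly_smult[of "-1" 1, simplified])
  also have "integral {-1..1} (poly ((pderiv^^l) (lu l) * g)) = 0"
    using ibp_iter[of l l g] z by (simp add: poly_zero_fun)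
  finally show ?thesis by (metis mult_zero_right)
qed

definition mom :: "real set \<Rightarrow> real poly \<Rightarrow> real" where
  "mom S p = integral S (poly p)"

lemma mom_add: "a \<le> b \<Longrightarrow> mom {a..b} (p + q) = mom {a..b} p + mom {a..b} q"
  unfolding mom_def by (rule integral_poly_add)

lemma mom_diff: "a \<le> b \<Longrightarrow> mom {a..b} (p - q) = mom {a..b} p - mom {a..b} q"
  unfolding mom_def by (rule integral_poly_diff)

lemma mom_smult: "a \<le> b \<Longrightarrow> mom {a..b} (Polynomial.smult c p) = c * mom {a..b} p"
  unfolding mom_def by (rule integral_poly_smult)

lemma mom_sum: "a \<le> b \<Longrightarrow> mom {a..b} (\<Sum>i\<in>A. f i) = (\<Sum>i\<in>A. mom {a..b} (f i))"
  unfolding mom_def by (rule integral_poly_sum)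

lemma mom_fun: "integral S (\<lambda>x. poly p x * poly q x) = mom S (p * q)"
  unfolding mom_def poly_mult_fun ..

lemma mom_sum_smult:
  "mom {-1..1} (\<Sum>c<n. Polynomial.smult (f c) (p c)) = (\<Sum>c<n. f c * mom {-1..1} (p c))"
proof -
  have "mom {-1..1} (\<Sum>c<n. Polynomial.smult (f c) (p c)) = (\<Sum>c<n. mom {-1..1} (Polynomial.smult (f c) (p c)))"
    by (rule mom_sum) simp
  also have "\<dots> = (\<Sum>c<n. f c * mom {-1..1} (p c))"
    by (rule sum.cong) (simp_all add: mom_smult)
  finally show ?thesis .
qed

lemma lin_indep:
  fixes Q :: "nat \<Rightarrow> real poly" and g :: "nat \<Rightarrow> nat"
  assumes g: "strict_mono g" and Q: "\<forall>k. degree (Q k) \<le> g k \<and> coeff (Q k) (g k) \<noteq> 0"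
  shows "(\<Sum>k<n. Polynomial.smult (f k) (Q k)) = 0 \<longrightarrow> (\<forall>k<n. f k = 0)"
proof (induction n)
  case 0 show ?case by simp
next
  case (Suc n)
  show ?case
  proof
    assume S: "(\<Sum>k<Suc n. Polynomial.smult (f k) (Q k)) = 0"
    have c0: "coeff (\<Sum>k<n. Polynomial.smult (f k) (Q k)) (g n) = 0"
      unfolding coeff_sum
    proof (rule sum.neutral, intro ballI)
      fix k assume "k \<in> {..<n}"
      then have "g k < g n" using g by (simp add: strict_mono_less)
      then have "degree (Q k) < g n" using Q le_less_trans by blast
      then show "coeff (Polynomial.smult (f k) (Q k)) (g n) = 0" by (simp add: coeff_eq_0)
    qed
    have "coeff (\<Sum>k<Suc n. Polynomial.smult (f k) (Q k)) (g n) = f n * coeff (Q n) (g n)"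
      using c0 by simp
    moreover have "coeff (\<Sum>k<Suc n. Polynomial.smult (f k) (Q k)) (g n) = 0"
      unfolding S by simp
    ultimately have "f n * coeff (Q n) (g n) = 0" by simp
    then have fn: "f n = 0" using Q by simp
    then have "(\<Sum>k<n. Polynomial.smult (f k) (Q k)) = 0" using S by simp
    then have "\<forall>k<n. f k = 0" using Suc.IH by blast
    then show "\<forall>k<Suc n. f k = 0" using fn less_Suc_eq by auto
  qed
qed

lemma leg_a_mom: "mom {-1..1} (legendre k * pcompose (legendre l) [:2,1:]) = leg_a k l"
proof -
  have "poly (legendre k * pcompose (legendre l) [:2,1:]) = (\<lambda>s. poly (legendre k) s * poly (legendre l) (s + 2))"
    by (rule ext) (simp add: poly_pcompose add.commute)
  then show ?thesis by (simp only: mom_def leg_a_def)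
qed

lemma legendre_orth_mom: "k < l \<Longrightarrow> mom {-1..1} (legendre l * legendre k) = 0"
  unfolding mom_def by (rule legendre_orth) (simp add: degree_legendre)

lemma legendre_shift_Q:
  "degree (pcompose (legendre k) [:c,1:]) \<le> k \<and> coeff (pcompose (legendre k) [:c,1:]) k \<noteq> 0"
proof -
  have d: "degree (pcompose (legendre k) [:c,1:]) = k" by (simp add: degree_pcompose degree_legendre)
  have "lead_coeff (pcompose (legendre k) [:c,1:]) = lead_coeff (legendre k) * 1 ^ degree (legendre k)"
    using lead_coeff_comp[of "[:c,1:]" "legendre k"] by simp
  then show ?thesis using d coeff_legendre_top[of k] by (simp add: degree_legendre)
qed

lemma parity2: "poly (legendre l) (- 2 - s) = (-1)^l * poly (legendre l) (s + 2)"
proof -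
  have e: "- 2 - s = - (s + 2)" by simp
  show ?thesis unfolding e by (rule legendre_parity)
qed

lemma parity3: "poly (legendre l) (- s - 2) = (-1)^l * poly (legendre l) (s + 2)"
proof -
  have e: "- s - 2 = - (s + 2)" by simp
  show ?thesis unfolding e by (rule legendre_parity)
qed

lemma recon_invertible: "invertible_mat (recon_matrix N)"
proof -
  let ?n = "2*N+2"
  let ?B = "recon_matrix N"
  have Bc: "?B \<in> carrier_mat ?n ?n" by (simp add: recon_matrix_def)
  have "det ?B \<noteq> 0"
  proof
    assume "det ?B = 0"
    then obtain \<beta> where \<beta>: "\<beta> \<in> carrier_vec ?n" "\<beta> \<noteq> 0\<^sub>v ?n" "?B *\<^sub>v \<beta> = 0\<^sub>v ?n"
      using det_0_iff_vec_prod_zero_field[OF Bc] by blast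
    have row: "(\<Sum>c<?n. ?B $$ (r,c) * \<beta> $ c) = 0" if "r < ?n" for r
    proof -
      have "(?B *\<^sub>v \<beta>) $ r = 0" using \<beta>(3) that by simp
      moreover have "(?B *\<^sub>v \<beta>) $ r = (\<Sum>c<?n. ?B $$ (r,c) * \<beta> $ c)"
        using that \<beta>(1) Bc by (simp add: scalar_prod_def lessThan_atLeast0)
      ultimately show ?thesis by simp
    qed
    have rowa: "(\<Sum>c<?n. \<beta> $ c * leg_a k (N+1+c)) = 0" if "k \<le> N" for k
    proof -
      have "(\<Sum>c<?n. ?B $$ (k,c) * \<beta> $ c) = (\<Sum>c<?n. \<beta> $ c * leg_a k (N+1+c))"
        by (rule sum.cong) (use that in \<open>auto simp: recon_matrix_def\<close>)
      then show ?thesis using row[of k] that by simp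
    qed
    have rowc: "(\<Sum>c<?n. \<beta> $ c * leg_c k (N+1+c)) = 0" if "k \<le> N" for k
    proof -
      have "(\<Sum>c<?n. ?B $$ (N+1+k,c) * \<beta> $ c) = (\<Sum>c<?n. \<beta> $ c * leg_c k (N+1+c))"
        by (rule sum.cong) (use that in \<open>auto simp: recon_matrix_def\<close>)
      then show ?thesis using row[of "N+1+k"] that by simp
    qed
    have rowb: "(\<Sum>c<?n. \<beta> $ c * leg_b k (N+1+c)) = 0" if "k \<le> N" for k
    proof -
      have "(\<Sum>c<?n. \<beta> $ c * leg_b k (N+1+c))
          = (\<Sum>c<?n. 2 * (\<beta> $ c * leg_c k (N+1+c)) - \<beta> $ c * leg_a k (N+1+c))"
        by (rule sum.cong) (simp_all add: leg_c_def algebra_simps)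
      also have "\<dots> = 2 * (\<Sum>c<?n. \<beta> $ c * leg_c k (N+1+c)) - (\<Sum>c<?n. \<beta> $ c * leg_a k (N+1+c))"
        by (simp add: sum_subtractf sum_distrib_left)
      also have "\<dots> = 0" using rowa[OF that] rowc[OF that] by simp
      finally show ?thesis .
    qed
    define w where "w = (\<Sum>c<?n. Polynomial.smult (\<beta>$c) (legendre (N+1+c)))"
    have dw: "degree w \<le> 3*N+2" unfolding w_def
    proof (rule degree_sum_le)
      fix c assume "c \<in> {..<?n}"
      then show "degree (Polynomial.smult (\<beta>$c) (legendre (N+1+c))) \<le> 3*N+2"
        using degree_smult_le[of "\<beta>$c" "legendre (N+1+c)"] by (simp add: degree_legendre)
    qed simp
    have s1: "\<forall>\<phi>. degree \<phi> \<le> N \<longrightarrow> integral {-1..1} (poly (w * \<phi>)) = 0"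
    proof (rule span_moments[of N legendre])
      show "\<forall>k\<le>N. degree (legendre k) \<le> k \<and> coeff (legendre k) k \<noteq> 0"
        by (simp add: degree_legendre coeff_legendre_top)
      show "\<forall>k\<le>N. integral {-1..1} (poly (w * legendre k)) = 0"
      proof (intro allI impI)
        fix k assume k: "k \<le> N"
        have "w * legendre k = (\<Sum>c<?n. Polynomial.smult (\<beta>$c) (legendre (N+1+c) * legendre k))"
          unfolding w_def sum_distrib_right by (simp only: mult_smult_left)
        then have "mom {-1..1} (w * legendre k) = mom {-1..1} (\<Sum>c<?n. Polynomial.smult (\<beta>$c) (legendre (N+1+c) * legendre k))"
          by (rule arg_cong)
        also have "\<dots> = (\<Sum>c<?n. mom {-1..1} (Polynomial.smult (\<beta>$c) (legendre (N+1+c) * legendre k)))"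
          by (rule mom_sum) simp
        also have "\<dots> = (\<Sum>c<?n. \<beta>$c * mom {-1..1} (legendre (N+1+c) * legendre k))"
          by (rule sum.cong) (simp_all add: mom_smult)
        also have "\<dots> = 0" using k by (simp add: legendre_orth_mom)
        finally show "integral {-1..1} (poly (w * legendre k)) = 0" by (simp only: mom_def)
      qed
    qed simp
    have s2: "\<forall>\<phi>. degree \<phi> \<le> N \<longrightarrow> integral {1..3} (poly (w * \<phi>)) = 0"
    proof (rule span_moments[of N "\<lambda>k. pcompose (legendre k) [:-2,1:]"])
      show "\<forall>k\<le>N. degree (pcompose (legendre k) [:-2,1:]) \<le> k \<and> coeff (pcompose (legendre k) [:-2,1:]) k \<noteq> 0"
        using legendre_shift_Q by blast
      show "\<forall>k\<le>N. integral {1..3} (poly (w * pcompose (legendre k) [:-2,1:])) = 0"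
      proof (intro allI impI)
        fix k assume k: "k \<le> N"
        let ?q = "w * pcompose (legendre k) [:-2,1:]"
        have sh: "mom {-1..1} (pcompose ?q [:2,1:]) = mom {1..3} ?q"
          using integral_poly_shift[of "-1" 1 ?q 2] by (simp add: mom_def del: poly_mult)
        have "pcompose ?q [:2,1:] = (\<Sum>c<?n. Polynomial.smult (\<beta>$c) (legendre k * pcompose (legendre (N+1+c)) [:2,1:]))"
          by (rule poly_eq_poly_eq_iff[THEN iffD1], rule ext)
             (simp add: poly_pcompose w_def poly_sum sum_distrib_left sum_distrib_right algebra_simps)
        then have "mom {-1..1} (pcompose ?q [:2,1:]) = (\<Sum>c<?n. \<beta>$c * leg_a k (N+1+c))"
          by (simp only: mom_sum_smult leg_a_mom)
        also have "\<dots> = 0" using rowa k by simp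
        finally show "integral {1..3} (poly ?q) = 0" using sh by (simp only: mom_def)
      qed
    qed simp
    have s0: "\<forall>\<phi>. degree \<phi> \<le> N \<longrightarrow> integral {-3..-1} (poly (w * \<phi>)) = 0"
    proof (rule span_moments[of N "\<lambda>k. pcompose (legendre k) [:2,1:]"])
      show "\<forall>k\<le>N. degree (pcompose (legendre k) [:2,1:]) \<le> k \<and> coeff (pcompose (legendre k) [:2,1:]) k \<noteq> 0"
        using legendre_shift_Q by blast
      show "\<forall>k\<le>N. integral {-3..-1} (poly (w * pcompose (legendre k) [:2,1:])) = 0"
      proof (intro allI impI)
        fix k assume k: "k \<le> N"
        let ?q = "w * pcompose (legendre k) [:2,1:]"
        have sh: "mom {-1..1} (pcompose ?q [:-2,-1:]) = mom {-3..-1} ?q"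
          using integral_poly_reflect[of "-1" 1 ?q "-2"] by (simp add: mom_def del: poly_mult)
        have "pcompose ?q [:-2,-1:] = (\<Sum>c<?n. Polynomial.smult (\<beta>$c * (-1)^(k + (N+1+c)))
                  (legendre k * pcompose (legendre (N+1+c)) [:2,1:]))"
        proof (rule poly_eq_poly_eq_iff[THEN iffD1], rule ext)
          fix s :: real
          have e1: "poly (pcompose ?q [:-2,-1:]) s = poly w (-2 - s) * poly (legendre k) (-s)"
            by (simp add: poly_pcompose)
          have e2: "poly w (-2 - s) = (\<Sum>c<?n. \<beta>$c * poly (legendre (N+1+c)) (-2 - s))"
            unfolding w_def poly_sum poly_smult ..
          have e3: "poly (legendre k) (-s) = (-1)^k * poly (legendre k) s" by (rule legendre_parity)
          show "poly (pcompose ?q [:-2,-1:]) s = poly (\<Sum>c<?n. Polynomial.smult (\<beta>$c * (-1)^(k + (N+1+c)))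
                  (legendre k * pcompose (legendre (N+1+c)) [:2,1:])) s"
            unfolding e1 e2 e3 poly_sum sum_distrib_right
            by (rule sum.cong) (simp_all add: parity2 parity3 poly_pcompose power_add algebra_simps)
        qed
        then have "mom {-1..1} (pcompose ?q [:-2,-1:]) = (\<Sum>c<?n. (\<beta>$c * (-1)^(k + (N+1+c))) * leg_a k (N+1+c))"
          by (simp only: mom_sum_smult leg_a_mom)
        also have "\<dots> = (\<Sum>c<?n. \<beta>$c * leg_b k (N+1+c))"
          by (rule sum.cong) (simp_all add: leg_b_def)
        also have "\<dots> = 0" using rowb k by simp
        finally show "integral {-3..-1} (poly ?q) = 0" using sh by (simp only: mom_def)
      qed
    qed simp
    have "w = 0"
    proof (rule key_injective[of 2 w N "-1"])
      show "\<forall>j\<in>{0,1,2::nat}. \<forall>\<phi>. degree \<phi> \<le> N \<longrightarrow>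
              integral (cell (-1) 2 j) (\<lambda>x. poly w x * poly \<phi> x) = 0"
      proof (intro ballI allI impI)
        fix j :: nat and \<phi> :: "real poly" assume j: "j \<in> {0,1,2}" and d: "degree \<phi> \<le> N"
        have c: "cell (-1) 2 0 = {-3..-1}" "cell (-1) 2 1 = {-1..1}" "cell (-1) 2 2 = {1..3}"
          by (simp_all add: cell_def)
        show "integral (cell (-1) 2 j) (\<lambda>x. poly w x * poly \<phi> x) = 0"
          unfolding poly_mult_fun using j c s0 s1 s2 d by auto
      qed
    qed (use dw in auto)
    moreover have "(\<Sum>c<?n. Polynomial.smult (\<beta>$c) (legendre (N+1+c))) = 0 \<longrightarrow> (\<forall>c<?n. \<beta>$c = 0)"
      by (rule lin_indep[where g="\<lambda>c. N+1+c"]) (simp_all add: strict_mono_def degree_legendre coeff_legendre_top)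
    ultimately have "\<forall>c<?n. \<beta>$c = 0" unfolding w_def by blast
    then have "\<beta> = 0\<^sub>v ?n" using \<beta>(1) by (intro eq_vecI) auto
    with \<beta>(2) show False ..
  qed
  then have "?B \<in> Units (ring_mat TYPE(real) ?n ())" by (rule det_non_zero_imp_unit[OF Bc])
  then obtain B' where B': "B' \<in> carrier_mat ?n ?n" "B' * ?B = 1\<^sub>m ?n" "?B * B' = 1\<^sub>m ?n"
    unfolding Units_def ring_mat_def by auto
  then show ?thesis unfolding invertible_mat_def inverts_mat_def using Bc by (auto simp: square_mat.simps)
qed

lemma cell_eq: "cell a h j = {a + (real j - 1) * h .. a + real j * h}"
  by (simp add: cell_def)

lemma cell_le: "h > 0 \<Longrightarrow> a + (real j - 1) * h \<le> a + real j * h"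
  by (simp add: algebra_simps)

lemma mc_sum: "h > 0 \<Longrightarrow> mom (cell a h j) (\<Sum>i\<in>A. f i) = (\<Sum>i\<in>A. mom (cell a h j) (f i))"
  unfolding cell_eq by (rule mom_sum) (rule cell_le)

lemma mc_smult: "h > 0 \<Longrightarrow> mom (cell a h j) (Polynomial.smult c p) = c * mom (cell a h j) p"
  unfolding cell_eq by (rule mom_smult) (rule cell_le)

lemma mc_diff: "h > 0 \<Longrightarrow> mom (cell a h j) (p - q) = mom (cell a h j) p - mom (cell a h j) q"
  unfolding cell_eq by (rule mom_diff) (rule cell_le)

lemma cell_span:
  fixes d :: "real poly"
  assumes h: "h > 0" and m0: "\<forall>k\<le>N. mom (cell a h j) (d * monom 1 k) = 0"
  shows "\<forall>\<phi>. degree \<phi> \<le> N \<longrightarrow> mom (cell a h j) (d * \<phi>) = 0"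
proof -
  have le: "a + (real j - 1) * h \<le> a + real j * h" using h by (rule cell_le)
  have Q: "\<forall>k\<le>N. degree (monom (1::real) k) \<le> k \<and> coeff (monom (1::real) k) k \<noteq> 0"
    by (simp add: degree_monom_eq)
  have m: "\<forall>k\<le>N. integral {a + (real j - 1) * h .. a + real j * h} (poly (d * monom 1 k)) = 0"
    using m0 unfolding mom_def cell_eq .
  have "\<forall>\<phi>. degree \<phi> \<le> N \<longrightarrow> integral {a + (real j - 1) * h .. a + real j * h} (poly (d*\<phi>)) = 0"
    by (rule span_moments[OF Q m le])
  then show ?thesis unfolding mom_def cell_eq .
qed

lemma divmod_aux: "k < (m::nat) \<Longrightarrow> (j*m + k) div m = j \<and> (j*m + k) mod m = k"
  by simp

lemma exists_recon:
  fixes v :: "nat \<Rightarrow> real poly"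
  assumes h: "h > 0"
  shows "\<exists>w. degree w \<le> 3*N+2 \<and> (\<forall>j\<in>{0,1,2::nat}. \<forall>\<phi>. degree \<phi> \<le> N \<longrightarrow>
            mom (cell a h j) (w*\<phi>) = mom (cell a h j) (v j * \<phi>))"
proof -
  let ?n = "3*N+3"
  define M where "M = mat ?n ?n (\<lambda>(r,c). mom (cell a h (r div (N+1))) (monom 1 c * monom 1 (r mod (N+1))))"
  define P where "P = (\<lambda>cv::real vec. (\<Sum>c<?n. monom (cv $ c) c))"
  have Mc: "M \<in> carrier_mat ?n ?n" by (simp add: M_def)
  have dP: "degree (P cv) \<le> 3*N+2" for cv
    unfolding P_def
  proof (rule degree_sum_le)
    fix c assume "c \<in> {..<?n}"
    then show "degree (monom (cv $ c) c) \<le> 3*N+2"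
      using degree_monom_le[of "cv $ c" c] by simp
  qed simp
  have cP: "coeff (P cv) c = cv $ c" if "c < ?n" for cv c
    using that by (simp add: P_def coeff_sum)
  have Mv: "(M *\<^sub>v cv) $ r = mom (cell a h (r div (N+1))) (P cv * monom 1 (r mod (N+1)))"
    if r: "r < ?n" and cv: "cv \<in> carrier_vec ?n" for r cv
  proof -
    let ?S = "cell a h (r div (N+1))" and ?m = "monom (1::real) (r mod (N+1))"
    have "(M *\<^sub>v cv) $ r = (\<Sum>c<?n. M $$ (r,c) * cv $ c)"
      using r cv Mc by (simp add: scalar_prod_def lessThan_atLeast0)
    also have "\<dots> = (\<Sum>c<?n. cv $ c * mom ?S (monom 1 c * ?m))"
      by (rule sum.cong) (auto simp: M_def r)
    also have "\<dots> = mom ?S (\<Sum>c<?n. Polynomial.smult (cv$c) (monom 1 c * ?m))"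
      by (simp add: mc_sum[OF h] mc_smult[OF h])
    also have "(\<Sum>c<?n. Polynomial.smult (cv$c) (monom 1 c * ?m)) = P cv * ?m"
      by (simp add: P_def sum_distrib_right smult_monom_mult)
    finally show ?thesis .
  qed
  have rr: "j*(N+1)+k < ?n \<and> (j*(N+1)+k) div (N+1) = j \<and> (j*(N+1)+k) mod (N+1) = k"
    if "j \<in> {0,1,2::nat}" "k \<le> N" for j k
  proof -
    have "j*(N+1)+k < ?n" using that by auto
    moreover have "k < N+1" using that by simp
    ultimately show ?thesis using divmod_aux[of k "N+1" j] by blast
  qed
  have inj: "cv = 0\<^sub>v ?n" if cvc: "cv \<in> carrier_vec ?n" and z: "M *\<^sub>v cv = 0\<^sub>v ?n" for cv
  proof -
    have "\<forall>j\<in>{0,1,2::nat}. \<forall>\<phi>. degree \<phi> \<le> N \<longrightarrow>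
              integral (cell a h j) (\<lambda>x. poly (P cv) x * poly \<phi> x) = 0"
    proof (intro ballI)
      fix j :: nat assume j: "j \<in> {0,1,2}"
      have "\<forall>k\<le>N. mom (cell a h j) (P cv * monom 1 k) = 0"
      proof (intro allI impI)
        fix k assume k: "k \<le> N"
        define r where "r = j*(N+1)+k"
        have rn: "r < ?n" "r div (N+1) = j" "r mod (N+1) = k" using rr[OF j k] r_def by auto
        have "(M *\<^sub>v cv) $ r = 0" using z rn by simp
        then show "mom (cell a h j) (P cv * monom 1 k) = 0" using Mv[OF rn(1) cvc] rn by simp
      qed
      then have "\<forall>\<phi>. degree \<phi> \<le> N \<longrightarrow> mom (cell a h j) (P cv * \<phi>) = 0" by (rule cell_span[OF h])
      then show "\<forall>\<phi>. degree \<phi> \<le> N \<longrightarrow> integral (cell a h j) (\<lambda>x. poly (P cv) x * poly \<phi> x) = 0"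
        unfolding mom_fun .
    qed
    then have "P cv = 0" using key_injective[OF h dP] by blast
    then have "\<forall>c<?n. cv $ c = 0" using cP by (metis coeff_0)
    then show "cv = 0\<^sub>v ?n" using cvc by (intro eq_vecI) auto
  qed
  have "det M \<noteq> 0" using det_0_iff_vec_prod_zero_field[OF Mc] inj by blast
  then have "M \<in> Units (ring_mat TYPE(real) ?n ())" by (rule det_non_zero_imp_unit[OF Mc])
  then obtain Mi where Mi: "Mi \<in> carrier_mat ?n ?n" "M * Mi = 1\<^sub>m ?n"
    unfolding Units_def ring_mat_def by auto
  define b where "b = vec ?n (\<lambda>r. mom (cell a h (r div (N+1))) (v (r div (N+1)) * monom 1 (r mod (N+1))))"
  have bc: "b \<in> carrier_vec ?n" by (simp add: b_def)
  define cv where "cv = Mi *\<^sub>v b"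
  have cvc: "cv \<in> carrier_vec ?n" using Mi bc by (simp add: cv_def)
  have "M *\<^sub>v cv = (M * Mi) *\<^sub>v b" unfolding cv_def using assoc_mult_mat_vec[OF Mc Mi(1) bc] by simp
  then have Mcv: "M *\<^sub>v cv = b" using Mi(2) bc by simp
  define w where "w = P cv"
  show ?thesis
  proof (intro exI conjI ballI allI impI)
    show "degree w \<le> 3*N+2" unfolding w_def by (rule dP)
    fix j :: nat and \<phi> :: "real poly" assume j: "j \<in> {0,1,2}" and d: "degree \<phi> \<le> N"
    have "\<forall>k\<le>N. mom (cell a h j) ((w - v j) * monom 1 k) = 0"
    proof (intro allI impI)
      fix k assume k: "k \<le> N"
      define r where "r = j*(N+1)+k"
      have rn: "r < ?n" "r div (N+1) = j" "r mod (N+1) = k" using rr[OF j k] r_def by auto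
      have "(M *\<^sub>v cv) $ r = b $ r" using Mcv by simp
      then have "mom (cell a h j) (w * monom 1 k) = mom (cell a h j) (v j * monom 1 k)"
        using Mv[OF rn(1) cvc] rn by (simp add: b_def w_def)
      moreover have "(w - v j) * monom 1 k = w * monom 1 k - v j * monom 1 k" by (simp add: algebra_simps)
      ultimately show "mom (cell a h j) ((w - v j) * monom 1 k) = 0" by (simp add: mc_diff[OF h])
    qed
    then have "mom (cell a h j) ((w - v j) * \<phi>) = 0" using cell_span[OF h] d by blast
    moreover have "(w - v j) * \<phi> = w * \<phi> - v j * \<phi>" by (simp add: algebra_simps)
    ultimately show "mom (cell a h j) (w*\<phi>) = mom (cell a h j) (v j * \<phi>)" by (simp add: mc_diff[OF h])
  qed
qed

theorem mainTheorem1: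
  fixes N :: nat and h a :: real and v :: "nat \<Rightarrow> real poly"
  assumes "h > 0"
    and "\<forall>j\<in>{0,1,2}. degree (v j) \<le> N"
  shows "invertible_mat (recon_matrix N) \<and>
    (\<exists>!w :: real poly. degree w \<le> 3 * N + 2 \<and>
       (\<forall>\<phi> :: real poly. degree \<phi> \<le> N \<longrightarrow>
          (\<forall>j\<in>{0,1,2}.
             integral (cell a h j) (\<lambda>x. poly w x * poly \<phi> x)
           = integral (cell a h j) (\<lambda>x. poly (v j) x * poly \<phi> x))))"
proof (intro conjI)
  show "invertible_mat (recon_matrix N)" by (rule recon_invertible)
  have h: "h > 0" by fact
  show "\<exists>!w :: real poly. degree w \<le> 3 * N + 2 \<and>
       (\<forall>\<phi> :: real poly. degree \<phi> \<le> N \<longrightarrow>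
          (\<forall>j\<in>{0,1,2}.
             integral (cell a h j) (\<lambda>x. poly w x * poly \<phi> x)
           = integral (cell a h j) (\<lambda>x. poly (v j) x * poly \<phi> x)))"
    unfolding mom_fun
  proof (rule ex_ex1I)
    obtain w where w: "degree w \<le> 3*N+2" "\<forall>j\<in>{0,1,2::nat}. \<forall>\<phi>. degree \<phi> \<le> N \<longrightarrow>
            mom (cell a h j) (w*\<phi>) = mom (cell a h j) (v j * \<phi>)"
      using exists_recon[OF h, of N a v] by blast
    then show "\<exists>w. degree w \<le> 3 * N + 2 \<and> (\<forall>\<phi>. degree \<phi> \<le> N \<longrightarrow>
        (\<forall>j\<in>{0, 1, 2}. mom (cell a h j) (w * \<phi>) = mom (cell a h j) (v j * \<phi>)))"
      by blast
  next
    fix w1 w2 :: "real poly"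
    assume A1: "degree w1 \<le> 3 * N + 2 \<and> (\<forall>\<phi>. degree \<phi> \<le> N \<longrightarrow>
        (\<forall>j\<in>{0, 1, 2}. mom (cell a h j) (w1 * \<phi>) = mom (cell a h j) (v j * \<phi>)))"
      and A2: "degree w2 \<le> 3 * N + 2 \<and> (\<forall>\<phi>. degree \<phi> \<le> N \<longrightarrow>
        (\<forall>j\<in>{0, 1, 2}. mom (cell a h j) (w2 * \<phi>) = mom (cell a h j) (v j * \<phi>)))"
    have dd: "degree (w1 - w2) \<le> 3*N+2"
      using A1 A2 degree_diff_le by blast
    have "w1 - w2 = 0"
    proof (rule key_injective[OF h dd])
      show "\<forall>j\<in>{0,1,2::nat}. \<forall>\<phi>. degree \<phi> \<le> N \<longrightarrow>
              integral (cell a h j) (\<lambda>x. poly (w1 - w2) x * poly \<phi> x) = 0"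
        unfolding mom_fun
      proof (intro ballI allI impI)
        fix j :: nat and \<phi> :: "real poly" assume j: "j \<in> {0,1,2}" and d: "degree \<phi> \<le> N"
        have "(w1 - w2) * \<phi> = w1 * \<phi> - w2 * \<phi>" by (simp add: algebra_simps)
        then have "mom (cell a h j) ((w1 - w2) * \<phi>) = mom (cell a h j) (w1 * \<phi>) - mom (cell a h j) (w2 * \<phi>)"
          by (simp add: mc_diff[OF h])
        also have "\<dots> = 0" using A1 A2 j d by auto
        finally show "mom (cell a h j) ((w1 - w2) * \<phi>) = 0" .
      qed
    qed
    then show "w1 = w2" by simp
  qed
qed

end
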